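(* Let $X$ be a finite, connected, vertex-transitive graph with vertex set $V$, $|V|=n$, equipped with the graph (shortest-path) distance $d$, and let $D$ be its diameter. Let $A=\frac{1}{n^2}\sum_{x,y\in V} d(x,y)$ (sum over all ordered pairs, including $x=y$). Then $$\frac{D}{2}\le A\le \Big(1-\frac1n\Big)D.$$ Moreover, if $n\ge 2$ and $\bar A=\frac{1}{n(n-1)}\sum_{x\neq y} d(x,y)$ (sum over ordered pairs of distinct vertices), then $$\frac{D}{2}\cdot\frac{n}{n-1}\le \bar A\le D.$$
   Context: A graph is vertex-transitive if its automorphism group acts transitively on its vertices. *)

theory Defs
  imports Complex_Main
begin

definition simple_graph :: "'a set \<Rightarrow> ('a \<Rightarrow> 'a \<Rightarrow> bool) \<Rightarrow> bool" where
  "simple_graph V E \<longleftrightarrow> finite V \<and> V \<noteq> {} \<and>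
     (\<forall>x y. E x y \<longrightarrow> x \<in> V \<and> y \<in> V) \<and>
     (\<forall>x y. E x y \<longrightarrow> E y x) \<and> (\<forall>x. \<not> E x x)"

definition walk :: "'a set \<Rightarrow> ('a \<Rightarrow> 'a \<Rightarrow> bool) \<Rightarrow> 'a list \<Rightarrow> bool" where
  "walk V E p \<longleftrightarrow> p \<noteq> [] \<and> set p \<subseteq> V \<and> (\<forall>i. Suc i < length p \<longrightarrow> E (p ! i) (p ! Suc i))"

definition connected_graph :: "'a set \<Rightarrow> ('a \<Rightarrow> 'a \<Rightarrow> bool) \<Rightarrow> bool" where
  "connected_graph V E \<longleftrightarrow>
     (\<forall>x\<in>V. \<forall>y\<in>V. \<exists>p. walk V E p \<and> hd p = x \<and> last p = y)"

definition dist_graph :: "'a set \<Rightarrow> ('a \<Rightarrow> 'a \<Rightarrow> bool) \<Rightarrow> 'a \<Rightarrow> 'a \<Rightarrow> nat" where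
  "dist_graph V E x y = (LEAST n. \<exists>p. walk V E p \<and> hd p = x \<and> last p = y \<and> length p = Suc n)"

definition diameter :: "'a set \<Rightarrow> ('a \<Rightarrow> 'a \<Rightarrow> bool) \<Rightarrow> nat" where
  "diameter V E = Max {dist_graph V E x y | x y. x \<in> V \<and> y \<in> V}"

definition graph_automorphism :: "'a set \<Rightarrow> ('a \<Rightarrow> 'a \<Rightarrow> bool) \<Rightarrow> ('a \<Rightarrow> 'a) \<Rightarrow> bool" where
  "graph_automorphism V E f \<longleftrightarrow> bij_betw f V V \<and>
     (\<forall>x\<in>V. \<forall>y\<in>V. E (f x) (f y) \<longleftrightarrow> E x y)"

definition vertex_transitive :: "'a set \<Rightarrow> ('a \<Rightarrow> 'a \<Rightarrow> bool) \<Rightarrow> bool" where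
  "vertex_transitive V E \<longleftrightarrow>
     (\<forall>x\<in>V. \<forall>y\<in>V. \<exists>f. graph_automorphism V E f \<and> f x = y)"

end

theory Submission
  imports Defs
begin

lemma walk_single: "walk V E [x] \<longleftrightarrow> x \<in> V"
  unfolding walk_def by auto

lemma walk_Cons2: "walk V E (x # y # p) \<longleftrightarrow> x \<in> V \<and> E x y \<and> walk V E (y # p)"
  unfolding walk_def
proof safe
  fix i assume h: "\<forall>i. Suc i < length (x # y # p) \<longrightarrow> E ((x # y # p) ! i) ((x # y # p) ! Suc i)"
    and "Suc i < length (y # p)"
  then show "E ((y # p) ! i) ((y # p) ! Suc i)" using h[rule_format, of "Suc i"] by simp
next
  fix i assume "E x y" and h: "\<forall>i. Suc i < length (y # p) \<longrightarrow> E ((y # p) ! i) ((y # p) ! Suc i)"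
    and "Suc i < length (x # y # p)"
  then show "E ((x # y # p) ! i) ((x # y # p) ! Suc i)"
    by (cases i) auto
qed (auto dest: spec[of _ 0])

lemma walk_append:
  assumes "walk V E p" "walk V E q" "last p = hd q"
  shows "walk V E (p @ tl q)"
  using assms
proof (induction p rule: induct_list012)
  case 1 then show ?case by (simp add: walk_def)
next
  case (2 a)
  then have "q \<noteq> []" by (simp add: walk_def)
  then have "q = a # tl q" using 2 by (cases q) auto
  then show ?case using 2 by simp
next
  case (3 a b r)
  have "walk V E ((b # r) @ tl q)" using 3 by (simp add: walk_Cons2)
  then show ?case using 3 by (simp add: walk_Cons2)
qed

lemma walk_rev: "walk V E p \<Longrightarrow> (\<forall>x y. E x y \<longrightarrow> E y x) \<Longrightarrow> walk V E (rev p)"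
proof (induction p rule: induct_list012)
  case 1 then show ?case by simp
next
  case (2 a) then show ?case by simp
next
  case (3 a b r)
  have w1: "walk V E (rev (b # r))" using 3 by (simp add: walk_Cons2)
  have w2: "walk V E [b, a]" using 3 by (auto simp: walk_Cons2 walk_single walk_def)
  have "walk V E (rev (b # r) @ tl [b, a])"
    by (rule walk_append[OF w1 w2]) simp
  then show ?case by simp
qed

lemma walk_nonempty: "walk V E p \<Longrightarrow> p \<noteq> []" by (simp add: walk_def)

lemma dist_le:
  assumes "walk V E p" "hd p = x" "last p = y"
  shows "dist_graph V E x y \<le> length p - 1"
proof -
  have "length p = Suc (length p - 1)" using walk_nonempty[OF assms(1)] by (cases p) auto
  then show ?thesis unfolding dist_graph_def
    by (intro Least_le) (use assms in blast)
qed

lemma dist_witness: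
  assumes "connected_graph V E" "x \<in> V" "y \<in> V"
  shows "\<exists>p. walk V E p \<and> hd p = x \<and> last p = y \<and> length p = Suc (dist_graph V E x y)"
proof -
  obtain p where p: "walk V E p" "hd p = x" "last p = y"
    using assms unfolding connected_graph_def by blast
  have "length p = Suc (length p - 1)" using walk_nonempty[OF p(1)] by (cases p) auto
  then have "\<exists>n. \<exists>p. walk V E p \<and> hd p = x \<and> last p = y \<and> length p = Suc n" using p by blast
  then show ?thesis unfolding dist_graph_def by (rule LeastI_ex)
qed

lemma dist_self: "x \<in> V \<Longrightarrow> dist_graph V E x x = 0"
  using dist_le[of V E "[x]" x x] by (simp add: walk_single)

lemma dist_tri:
  assumes "connected_graph V E" "x \<in> V" "y \<in> V" "z \<in> V"
  shows "dist_graph V E x z \<le> dist_graph V E x y + dist_graph V E y z"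
proof -
  obtain p where p: "walk V E p" "hd p = x" "last p = y" "length p = Suc (dist_graph V E x y)"
    using dist_witness[OF assms(1,2,3)] by blast
  obtain q where q: "walk V E q" "hd q = y" "last q = z" "length q = Suc (dist_graph V E y z)"
    using dist_witness[OF assms(1,3,4)] by blast
  have w: "walk V E (p @ tl q)" using walk_append[OF p(1) q(1)] p q by simp
  have "p \<noteq> []" "q \<noteq> []" using p q walk_nonempty by auto
  then have h: "hd (p @ tl q) = x" using p by simp
  have l: "last (p @ tl q) = z"
  proof (cases "tl q = []")
    case True
    then have "q = [hd q]" using \<open>q \<noteq> []\<close> by (cases q) auto
    then show ?thesis using p q True by (metis append.right_neutral last_ConsL)
  next
    case False
    then have "last (tl q) = last q" using \<open>q \<noteq> []\<close> by (cases q) auto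
    then show ?thesis using False q by simp
  qed
  have "dist_graph V E x z \<le> length (p @ tl q) - 1" by (rule dist_le[OF w h l])
  then show ?thesis using p q by simp
qed

lemma dist_sym:
  assumes "simple_graph V E" "connected_graph V E" "x \<in> V" "y \<in> V"
  shows "dist_graph V E y x \<le> dist_graph V E x y"
proof -
  obtain p where p: "walk V E p" "hd p = x" "last p = y" "length p = Suc (dist_graph V E x y)"
    using dist_witness[OF assms(2,3,4)] by blast
  have w: "walk V E (rev p)" using walk_rev[OF p(1)] assms(1) unfolding simple_graph_def by blast
  have "p \<noteq> []" using p walk_nonempty by auto
  then have "hd (rev p) = y" "last (rev p) = x" using p by (auto simp: hd_rev last_rev)
  from dist_le[OF w this] show ?thesis using p by simp
qed

lemma dist_aut:
  assumes "connected_graph V E" "graph_automorphism V E f" "x \<in> V" "y \<in> V"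
  shows "dist_graph V E (f x) (f y) \<le> dist_graph V E x y"
proof -
  obtain p where p: "walk V E p" "hd p = x" "last p = y" "length p = Suc (dist_graph V E x y)"
    using dist_witness[OF assms(1,3,4)] by blast
  have fV: "f ` V = V" using assms(2) unfolding graph_automorphism_def bij_betw_def by blast
  have w: "walk V E (map f p)"
    using p(1) assms(2) fV unfolding walk_def graph_automorphism_def
    by (auto simp: nth_mem subset_iff)
  have "p \<noteq> []" using p walk_nonempty by auto
  then have "hd (map f p) = f x" "last (map f p) = f y" using p by (auto simp: hd_map last_map)
  from dist_le[OF w this] show ?thesis using p by simp
qed


theorem theorem1p1:
  fixes V :: "'a set" and E :: "'a \<Rightarrow> 'a \<Rightarrow> bool"
  assumes "simple_graph V E" and "connected_graph V E" and "vertex_transitive V E"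
  defines "n \<equiv> card V"
  defines "D \<equiv> real (diameter V E)"
  defines "A \<equiv> (\<Sum>x\<in>V. \<Sum>y\<in>V. real (dist_graph V E x y)) / (real n)^2"
  defines "Abar \<equiv> (\<Sum>x\<in>V. \<Sum>y\<in>V - {x}. real (dist_graph V E x y)) / (real n * (real n - 1))"
  shows "(D / 2 \<le> A \<and> A \<le> (1 - 1 / real n) * D) \<and>
         (n \<ge> 2 \<longrightarrow> D / 2 * (real n / (real n - 1)) \<le> Abar \<and> Abar \<le> D)"
proof -
  let ?d = "dist_graph V E"
  define S where "S x = (\<Sum>y\<in>V. real (?d x y))" for x
  define T where "T = (\<Sum>x\<in>V. S x)"
  have fin: "finite V" and ne: "V \<noteq> {}" using assms(1) unfolding simple_graph_def by auto
  have npos: "n \<ge> 1" using fin ne unfolding n_def by (simp add: Suc_leI card_gt_0_iff)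
  let ?M = "{?d x y | x y. x \<in> V \<and> y \<in> V}"
  have Mfin: "finite ?M"
  proof -
    have "?M = (\<lambda>(x,y). ?d x y) ` (V \<times> V)" by auto
    then show ?thesis using fin by simp
  qed
  have dleD: "real (?d x y) \<le> D" if "x \<in> V" "y \<in> V" for x y
    unfolding D_def diameter_def using Max_ge[OF Mfin] that by auto
  obtain u v where uv: "u \<in> V" "v \<in> V" "real (?d u v) = D"
  proof -
    have "diameter V E \<in> ?M" unfolding diameter_def using Mfin ne by (intro Max_in) auto
    then show ?thesis using that unfolding D_def by auto
  qed
  have Seq: "S x = S u" if "x \<in> V" for x
  proof -
    have le: "S b \<le> S a" if "a \<in> V" "b \<in> V" for a b
    proof -
      obtain f where f: "graph_automorphism V E f" "f a = b"
        using assms(3) \<open>a \<in> V\<close> \<open>b \<in> V\<close> unfolding vertex_transitive_def by blast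
      have bij: "bij_betw f V V" using f unfolding graph_automorphism_def by blast
      have "S b = (\<Sum>y\<in>V. real (?d (f a) (f y)))"
        unfolding S_def f(2)[symmetric] using sum.reindex_bij_betw[OF bij, of "\<lambda>y. real (?d (f a) y)"] by simp
      also have "\<dots> \<le> S a" unfolding S_def
        by (intro sum_mono) (use dist_aut[OF assms(2) f(1) \<open>a \<in> V\<close>] in auto)
      finally show ?thesis .
    qed
    show ?thesis using le[OF that uv(1)] le[OF uv(1) that] by simp
  qed
  have T_eq: "T = real n * S u" unfolding T_def n_def using Seq by simp
  have lowS: "real n * D \<le> 2 * S u"
  proof -
    have "real n * D = (\<Sum>y\<in>V. D)" unfolding n_def by simp
    also have "\<dots> \<le> (\<Sum>y\<in>V. real (?d u y) + real (?d v y))"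
    proof (intro sum_mono)
      fix y assume y: "y \<in> V"
      have "?d u v \<le> ?d u y + ?d y v" using dist_tri[OF assms(2) uv(1) y uv(2)] .
      moreover have "?d y v \<le> ?d v y" using dist_sym[OF assms(1,2) uv(2) y] .
      ultimately show "D \<le> real (?d u y) + real (?d v y)" using uv(3) by linarith
    qed
    also have "\<dots> = S u + S v" unfolding S_def by (simp add: sum.distrib)
    also have "\<dots> = 2 * S u" using Seq[OF uv(2)] by simp
    finally show ?thesis .
  qed
  have rem: "(\<Sum>y\<in>V - {x}. real (?d x y)) = S x" if "x \<in> V" for x
    unfolding S_def using sum.remove[OF fin that, of "\<lambda>y. real (?d x y)"] dist_self[OF that] by simp
  have upS: "S x \<le> (real n - 1) * D" if "x \<in> V" for x
  proof -
    have "S x = (\<Sum>y\<in>V - {x}. real (?d x y))" using rem[OF that] by simp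
    also have "\<dots> \<le> (\<Sum>y\<in>V - {x}. D)" by (intro sum_mono) (use dleD that in auto)
    also have "\<dots> = (real n - 1) * D" using fin that npos unfolding n_def by (simp add: of_nat_diff)
    finally show ?thesis .
  qed
  have Tup: "T \<le> real n * ((real n - 1) * D)" using T_eq upS[OF uv(1)] npos
    by (simp add: mult_left_mono)
  have Tlow: "real n * (real n * D) \<le> 2 * T" using T_eq lowS npos
    by (metis mult.left_commute mult_left_mono of_nat_0_le_iff)
  have A_eq: "A = T / (real n)^2" unfolding A_def T_def S_def by simp
  have Ab_eq: "Abar = T / (real n * (real n - 1))" unfolding Abar_def T_def using rem by simp
  have nr: "real n > 0" using npos by simp
  have D0: "D \<ge> 0" unfolding D_def by simp
  have p1: "D / 2 \<le> A" unfolding A_eq using Tlow nr by (simp add: field_simps power2_eq_square)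
  have p2: "A \<le> (1 - 1 / real n) * D" unfolding A_eq using Tup nr
    by (simp add: field_simps power2_eq_square)
  have p3: "n \<ge> 2 \<longrightarrow> D / 2 * (real n / (real n - 1)) \<le> Abar \<and> Abar \<le> D"
  proof
    assume "n \<ge> 2"
    then have n1: "real n - 1 > 0" by simp
    have e: "D / 2 * (real n / (real n - 1)) = (real n * (real n * D) / 2) / (real n * (real n - 1))"
      using nr n1 by (simp add: field_simps)
    have "(real n * (real n * D) / 2) / (real n * (real n - 1)) \<le> T / (real n * (real n - 1))"
      using Tlow nr n1 by (intro divide_right_mono) auto
    then have "D / 2 * (real n / (real n - 1)) \<le> Abar" unfolding Ab_eq e .
    moreover have "Abar \<le> D" unfolding Ab_eq using Tup nr n1 by (simp add: field_simps)
    ultimately show "D / 2 * (real n / (real n - 1)) \<le> Abar \<and> Abar \<le> D" by simp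
  qed
  show ?thesis using p1 p2 p3 by blast
qed

end
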